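(* Let $R$ be a $*$-ring with unity and let $a,b$ be central elements of $R$ generating the same ideal, i.e. $Ra=Rb$. Then the posets $(a]=\{x\in R: x\leq a\}$ and $(b]=\{x\in R: x\leq b\}$, ordered by the natural partial order, are order isomorphic.
   Context: The natural partial order on a $*$-ring $R$ with unity: $a\leq b$ iff there is $x\in R$ with $a=xa=xb=ax^*=bx^*$. *)

theory Defs
  imports Main
begin

definition star_ring :: "('a::ring_1 \<Rightarrow> 'a) \<Rightarrow> bool" where
  "star_ring st \<longleftrightarrow>
     (\<forall>x y. st (x + y) = st x + st y) \<and>
     (\<forall>x y. st (x * y) = st y * st x) \<and>
     (\<forall>x. st (st x) = x)"

definition nat_le :: "('a::ring_1 \<Rightarrow> 'a) \<Rightarrow> 'a \<Rightarrow> 'a \<Rightarrow> bool" where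
  "nat_le st a b \<longleftrightarrow>
     (\<exists>x. a = x * a \<and> a = x * b \<and> a = a * st x \<and> a = b * st x)"

definition down_set :: "('a::ring_1 \<Rightarrow> 'a) \<Rightarrow> 'a \<Rightarrow> 'a set" where
  "down_set st a = {x. nat_le st x a}"

definition central :: "'a::ring_1 \<Rightarrow> bool" where
  "central a \<longleftrightarrow> (\<forall>x. a * x = x * a)"

definition order_iso_sets :: "('a \<Rightarrow> 'a \<Rightarrow> bool) \<Rightarrow> 'a set \<Rightarrow> 'a set \<Rightarrow> bool" where
  "order_iso_sets le A B \<longleftrightarrow>
     (\<exists>f. bij_betw f A B \<and> (\<forall>x\<in>A. \<forall>y\<in>A. le x y \<longleftrightarrow> le (f x) (f y)))"

end

theory Submission
  imports Defs
begin

lemma cen_eq: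
  fixes a :: "'a::ring_1"
  assumes "central a" "\<And>p q. p*a = q*a \<longleftrightarrow> p*b = q*b" "central b"
  shows "(c*a = d*(e*a) \<longleftrightarrow> c*b = d*(e*b)) \<and> (c*a = e*a*f \<longleftrightarrow> c*b = e*b*f)"
proof -
  have 1: "d*(e*a) = (d*e)*a" "d*(e*b) = (d*e)*b" by (simp_all add: mult.assoc)
  have "a*f = f*a" "b*f = f*b" using assms(1,3) unfolding central_def by auto
  then have 2: "e*a*f = (e*f)*a" "e*b*f = (e*f)*b" by (simp_all add: mult.assoc)
  show ?thesis unfolding 1 2 using assms(2) by blast
qed

lemma L:
  fixes a :: "'a::ring_1"
  assumes "central a" "\<And>p q. p*a = q*a \<longleftrightarrow> p*b = q*b" "central b"
  shows "nat_le st (c1*a) (c2*a) \<longleftrightarrow> nat_le st (c1*b) (c2*b)"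
proof -
  have "\<And>z. (c1*a = z*(c1*a) \<and> c1*a = z*(c2*a) \<and> c1*a = c1*a*st z \<and> c1*a = c2*a*st z)
     \<longleftrightarrow> (c1*b = z*(c1*b) \<and> c1*b = z*(c2*b) \<and> c1*b = c1*b*st z \<and> c1*b = c2*b*st z)"
    using cen_eq[OF assms] by blast
  then show ?thesis unfolding nat_le_def by blast
qed

lemma down_form:
  fixes a :: "'a::ring_1"
  assumes "central a" "x \<in> down_set st a"
  shows "\<exists>c. x = c*a"
proof -
  obtain y where "x = a * st y" using assms(2) unfolding down_set_def nat_le_def by blast
  then have "x = st y * a" using assms(1) unfolding central_def by simp
  then show ?thesis by blast
qed

theorem mainTheorem4:
  fixes st :: "'a::ring_1 \<Rightarrow> 'a" and a b :: 'a
  assumes "star_ring st"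
    and "central a" and "central b"
    and "{r * a | r. True} = {r * b | r. True}"
  shows "order_iso_sets (nat_le st) (down_set st a) (down_set st b)"
proof -
  have "a \<in> {r * b | r. True}" using assms(4) by (metis (mono_tags, lifting) mem_Collect_eq mult_1)
  then obtain u where u: "a = u*b" by blast
  have "b \<in> {r * a | r. True}" using assms(4) by (metis (mono_tags, lifting) mem_Collect_eq mult_1)
  then obtain v where v: "b = v*a" by blast
  have bv: "b = a*v" using v assms(2) unfolding central_def by metis
  have au: "a = b*u" using u assms(3) unfolding central_def by metis
  have K: "p*a = q*a \<longleftrightarrow> p*b = q*b" for p q
  proof
    assume "p*a = q*a" then show "p*b = q*b" unfolding bv by (metis mult.assoc)
  next
    assume "p*b = q*b" then show "p*a = q*a" unfolding au by (metis mult.assoc)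
  qed
  note LL = L[OF assms(2) K assms(3)]
  have fx: "c*a*v = c*b" for c using bv by (simp add: mult.assoc)
  have mem: "c*a \<in> down_set st a \<longleftrightarrow> c*b \<in> down_set st b" for c
  proof -
    have "nat_le st (c*a) (1*a) \<longleftrightarrow> nat_le st (c*b) (1*b)" by (rule LL)
    then show ?thesis unfolding down_set_def by simp
  qed
  define f where "f x = x*v" for x
  have "bij_betw f (down_set st a) (down_set st b)"
    unfolding bij_betw_def
  proof
    show "inj_on f (down_set st a)"
    proof (rule inj_onI)
      fix x y assume "x \<in> down_set st a" "y \<in> down_set st a" "f x = f y"
      then obtain c d where "x = c*a" "y = d*a" "c*b = d*b"
        using down_form[OF assms(2)] fx f_def by metis
      then show "x = y" using K by metis
    qed
    show "f ` down_set st a = down_set st b"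
    proof
      show "f ` down_set st a \<subseteq> down_set st b"
      proof
        fix y assume "y \<in> f ` down_set st a"
        then obtain x where x: "x \<in> down_set st a" "y = f x" by blast
        then obtain c where c: "x = c*a" using down_form[OF assms(2)] by blast
        have "y = c*b" using x c fx f_def by simp
        then show "y \<in> down_set st b" using mem x c by simp
      qed
      show "down_set st b \<subseteq> f ` down_set st a"
      proof
        fix y assume y: "y \<in> down_set st b"
        then obtain d where d: "y = d*b" using down_form[OF assms(3)] by metis
        have "d*a \<in> down_set st a" using mem y d by simp
        moreover have "f (d*a) = y" using fx d f_def by simp
        ultimately show "y \<in> f ` down_set st a" by blast
      qed
    qed
  qed
  moreover have "\<forall>x\<in>down_set st a. \<forall>y\<in>down_set st a. nat_le st x y \<longleftrightarrow> nat_le st (f x) (f y)"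
  proof (intro ballI)
    fix x y assume "x \<in> down_set st a" "y \<in> down_set st a"
    then obtain c d where "x = c*a" "y = d*a" using down_form[OF assms(2)] by metis
    then show "nat_le st x y \<longleftrightarrow> nat_le st (f x) (f y)" using LL fx f_def by simp
  qed
  ultimately show ?thesis unfolding order_iso_sets_def by blast
qed

end
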